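(* Consider the discrete-time system $x_{k+1}=A_kx_k+b_ku_k$ ($k\in\mathbb{Z}$) with $A_k\in\mathbb{R}^{n\times n}$, $b_k\in\mathbb{R}^{n\times1}$, and for $k\in\mathbb{Z}$ let $W_k=[\,b_k,\ A_kb_{k-1},\ A_kA_{k-1}b_{k-2},\ \dots,\ A_k\cdots A_{k-n+2}b_{k-n+1}\,]$. The system is completely controllable if and only if $W_k$ is nonsingular for every $k\in\mathbb{Z}$.
   Context: Complete controllability: for every $k\in\mathbb{Z}$ and every $\xi_s,\xi_f\in\mathbb{R}^n$ there are controls $u_k,\dots,u_{k+n-1}$ such that $x_k=\xi_s$ implies $x_{k+n}=\xi_f$. *)

theory Defs
  imports "Jordan_Normal_Form.Matrix"
begin

text \<open>State of x_{k+1} = A_k x_k + b_k u_k after j steps, starting at time k with x_k = xi.\<close>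
fun state :: "(int \<Rightarrow> real mat) \<Rightarrow> (int \<Rightarrow> real vec) \<Rightarrow> (int \<Rightarrow> real) \<Rightarrow> int \<Rightarrow> real vec \<Rightarrow> nat \<Rightarrow> real vec" where
  "state A b u k xi 0 = xi"
| "state A b u k xi (Suc j) =
     A (k + int j) *\<^sub>v state A b u k xi j + u (k + int j) \<cdot>\<^sub>v b (k + int j)"

definition completely_controllable :: "nat \<Rightarrow> (int \<Rightarrow> real mat) \<Rightarrow> (int \<Rightarrow> real vec) \<Rightarrow> bool" where
  "completely_controllable n A b \<longleftrightarrow>
     (\<forall>k. \<forall>xs \<in> carrier_vec n. \<forall>xf \<in> carrier_vec n.
        \<exists>u :: int \<Rightarrow> real. state A b u k xs n = xf)"

text \<open>aprod A k j = A_k A_{k-1} ... A_{k-j+1} (identity for j = 0).\<close>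
fun aprod :: "nat \<Rightarrow> (int \<Rightarrow> real mat) \<Rightarrow> int \<Rightarrow> nat \<Rightarrow> real mat" where
  "aprod n A k 0 = 1\<^sub>m n"
| "aprod n A k (Suc j) = aprod n A k j * A (k - int j)"

text \<open>W_k = [b_k, A_k b_{k-1}, ..., A_k ... A_{k-n+2} b_{k-n+1}].\<close>
definition Wmat :: "nat \<Rightarrow> (int \<Rightarrow> real mat) \<Rightarrow> (int \<Rightarrow> real vec) \<Rightarrow> int \<Rightarrow> real mat" where
  "Wmat n A b k = mat_of_cols n (map (\<lambda>j. aprod n A k j *\<^sub>v b (k - int j)) [0..<n])"

end

theory Submission
  imports Defs "Jordan_Normal_Form.Determinant"
begin

fun vsum :: "nat \<Rightarrow> (nat \<Rightarrow> real vec) \<Rightarrow> nat \<Rightarrow> real vec" where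
  "vsum n f 0 = 0\<^sub>v n"
| "vsum n f (Suc j) = f j + vsum n f j"

lemma vsum_carrier: "(\<And>i. i < j \<Longrightarrow> f i \<in> carrier_vec n) \<Longrightarrow> vsum n f j \<in> carrier_vec n"
  by (induction j) auto

lemma vsum_index: "(\<And>i. i < j \<Longrightarrow> f i \<in> carrier_vec n) \<Longrightarrow> r < n \<Longrightarrow>
   vsum n f j $ r = (\<Sum>i<j. f i $ r)"
proof (induction j)
  case 0 then show ?case by simp
next
  case (Suc j)
  have "f j \<in> carrier_vec n" using Suc by auto
  moreover have "vsum n f j \<in> carrier_vec n" using Suc vsum_carrier[of j f n] by auto
  ultimately show ?case using Suc by (simp add: add.commute)
qed

lemma vsum_mult: assumes M: "M \<in> carrier_mat n n"
  shows "(\<And>i. i < j \<Longrightarrow> f i \<in> carrier_vec n) \<Longrightarrow> M *\<^sub>v vsum n f j = vsum n (\<lambda>i. M *\<^sub>v f i) j"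
proof (induction j)
  case 0 then show ?case using M by auto
next
  case (Suc j)
  have "f j \<in> carrier_vec n" using Suc by auto
  moreover have "vsum n f j \<in> carrier_vec n" using Suc vsum_carrier[of j f n] by auto
  ultimately show ?case using Suc M by (simp add: mult_add_distrib_mat_vec)
qed

lemma vsum_cong: "(\<And>i. i < j \<Longrightarrow> f i = g i) \<Longrightarrow> vsum n f j = vsum n g j"
  by (induction j) auto

lemma aprod_carrier:
  assumes "\<And>k. A k \<in> carrier_mat n n"
  shows "aprod n A K j \<in> carrier_mat n n"
  using assms by (induction j) auto

lemma aprod_Suc_left:
  assumes AC: "\<And>k. A k \<in> carrier_mat n n"
  shows "aprod n A (K+1) (Suc j) = A (K+1) * aprod n A K j"
proof (induction j)
  case 0 then show ?case using AC[of "K+1"] by simp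
next
  case (Suc j)
  have "aprod n A (K+1) (Suc (Suc j)) = aprod n A (K+1) (Suc j) * A (K - int j)"
    by simp
  also have "\<dots> = A (K+1) * aprod n A K j * A (K - int j)" using Suc by simp
  also have "\<dots> = A (K+1) * (aprod n A K j * A (K - int j))"
    using AC aprod_carrier[of A n K j] by (meson assoc_mult_mat)
  finally show ?case by simp
qed

lemma state_formula:
  assumes AC: "\<And>k. A k \<in> carrier_mat n n" and BC: "\<And>k. b k \<in> carrier_vec n"
    and xs: "xs \<in> carrier_vec n"
  shows "state A b u k xs j = aprod n A (k + int j - 1) j *\<^sub>v xs +
     vsum n (\<lambda>i. u (k + int i) \<cdot>\<^sub>v (aprod n A (k + int j - 1) (j - 1 - i) *\<^sub>v b (k + int i))) j"
proof -
  have apc: "\<And>K j. aprod n A K j \<in> carrier_mat n n" using aprod_carrier AC by blast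
  show ?thesis
proof (induction j)
  case 0 then show ?case using xs by simp
next
  case (Suc j)
  let ?f = "\<lambda>i. u (k + int i) \<cdot>\<^sub>v (aprod n A (k + int j - 1) (j - 1 - i) *\<^sub>v b (k + int i))"
  have fc: "\<And>i. ?f i \<in> carrier_vec n" using apc BC by (metis mult_mat_vec_carrier smult_carrier_vec)
  have P: "aprod n A (k + int j - 1 + 1) (Suc m) = A (k + int j) * aprod n A (k + int j - 1) m" for m
    using aprod_Suc_left[OF AC, where K="k + int j - 1" and j=m] by simp
  have P': "aprod n A (k + int (Suc j) - 1) (Suc m) = A (k + int j) * aprod n A (k + int j - 1) m" for m
    using P[of m] by (simp add: algebra_simps)
  have "state A b u k xs (Suc j) = A (k + int j) *\<^sub>v (aprod n A (k + int j - 1) j *\<^sub>v xs + vsum n ?f j)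
       + u (k + int j) \<cdot>\<^sub>v b (k + int j)" using Suc by simp
  also have "\<dots> = aprod n A (k + int (Suc j) - 1) (Suc j) *\<^sub>v xs + vsum n (\<lambda>i. A (k + int j) *\<^sub>v ?f i) j
       + u (k + int j) \<cdot>\<^sub>v b (k + int j)"
  proof -
    have Ac: "A (k + int j) \<in> carrier_mat n n" using AC by blast
    have Xc: "aprod n A (k + int j - 1) j \<in> carrier_mat n n" using apc by blast
    have Vc: "vsum n ?f j \<in> carrier_vec n" using vsum_carrier[of j ?f n] fc by blast
    have "A (k + int j) *\<^sub>v (aprod n A (k + int j - 1) j *\<^sub>v xs + vsum n ?f j)
       = A (k + int j) *\<^sub>v (aprod n A (k + int j - 1) j *\<^sub>v xs) + A (k + int j) *\<^sub>v vsum n ?f j"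
      using mult_add_distrib_mat_vec[OF Ac mult_mat_vec_carrier[OF Xc xs] Vc] by simp
    also have "A (k + int j) *\<^sub>v (aprod n A (k + int j - 1) j *\<^sub>v xs)
       = (A (k + int j) * aprod n A (k + int j - 1) j) *\<^sub>v xs"
      using assoc_mult_mat_vec[OF Ac Xc xs] by simp
    also have "A (k + int j) * aprod n A (k + int j - 1) j = aprod n A (k + int (Suc j) - 1) (Suc j)"
      using P'[of j] by simp
    also have "A (k + int j) *\<^sub>v vsum n ?f j = vsum n (\<lambda>i. A (k + int j) *\<^sub>v ?f i) j"
      using vsum_mult[OF Ac, of j ?f] fc by blast
    finally show ?thesis by simp
  qed
  also have "vsum n (\<lambda>i. A (k + int j) *\<^sub>v ?f i) j =
     vsum n (\<lambda>i. u (k + int i) \<cdot>\<^sub>v (aprod n A (k + int (Suc j) - 1) (Suc j - 1 - i) *\<^sub>v b (k + int i))) j"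
  proof (rule vsum_cong)
    fix i assume i: "i < j"
    have e: "Suc j - 1 - i = Suc (j - 1 - i)" using i by simp
    have Ac: "A (k + int j) \<in> carrier_mat n n" using AC by blast
    have Xc: "aprod n A (k + int j - 1) (j - 1 - i) \<in> carrier_mat n n" using apc by blast
    have c: "aprod n A (k + int j - 1) (j - 1 - i) *\<^sub>v b (k + int i) \<in> carrier_vec n"
      using mult_mat_vec_carrier[OF Xc BC] .
    show "A (k + int j) *\<^sub>v ?f i = u (k + int i) \<cdot>\<^sub>v (aprod n A (k + int (Suc j) - 1) (Suc j - 1 - i) *\<^sub>v b (k + int i))"
      unfolding e P' using mult_mat_vec[OF Ac c] assoc_mult_mat_vec[OF Ac Xc BC] by simp
  qed
  finally have S: "state A b u k xs (Suc j) = aprod n A (k + int (Suc j) - 1) (Suc j) *\<^sub>v xs +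
     vsum n (\<lambda>i. u (k + int i) \<cdot>\<^sub>v (aprod n A (k + int (Suc j) - 1) (Suc j - 1 - i) *\<^sub>v b (k + int i))) j
     + u (k + int j) \<cdot>\<^sub>v b (k + int j)" .
  let ?g = "\<lambda>i. u (k + int i) \<cdot>\<^sub>v (aprod n A (k + int (Suc j) - 1) (Suc j - 1 - i) *\<^sub>v b (k + int i))"
  have gj: "?g j = u (k + int j) \<cdot>\<^sub>v b (k + int j)" using BC[of "k + int j"] by simp
  have gc: "\<And>i. ?g i \<in> carrier_vec n" using apc BC by (metis mult_mat_vec_carrier smult_carrier_vec)
  have X: "aprod n A (k + int (Suc j) - 1) (Suc j) *\<^sub>v xs \<in> carrier_vec n"
    using apc xs by (metis mult_mat_vec_carrier)
  have V: "vsum n ?g j \<in> carrier_vec n" using vsum_carrier[of j ?g n] gc by blast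
  have W: "u (k + int j) \<cdot>\<^sub>v b (k + int j) \<in> carrier_vec n" using BC by simp
  show ?case unfolding S vsum.simps gj
    using assoc_add_vec[OF X V W] comm_add_vec[OF V W] by simp
qed
qed


lemma matcols_mult:
  assumes cs: "\<And>c. c < m \<Longrightarrow> cs c \<in> carrier_vec n" and v: "v \<in> carrier_vec m"
  shows "mat_of_cols n (map cs [0..<m]) *\<^sub>v v = vsum n (\<lambda>c. v $ c \<cdot>\<^sub>v cs c) m"
proof -
  have fc: "\<And>c. c < m \<Longrightarrow> v $ c \<cdot>\<^sub>v cs c \<in> carrier_vec n" using cs by simp
  show ?thesis
  proof (rule eq_vecI)
    show "dim_vec (mat_of_cols n (map cs [0..<m]) *\<^sub>v v) = dim_vec (vsum n (\<lambda>c. v $ c \<cdot>\<^sub>v cs c) m)"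
      using vsum_carrier[of m "\<lambda>c. v $ c \<cdot>\<^sub>v cs c" n, OF fc] by simp
  next
    fix r assume "r < dim_vec (vsum n (\<lambda>c. v $ c \<cdot>\<^sub>v cs c) m)"
    then have r: "r < n" using vsum_carrier[of m "\<lambda>c. v $ c \<cdot>\<^sub>v cs c" n, OF fc] by simp
    have "(mat_of_cols n (map cs [0..<m]) *\<^sub>v v) $ r = (\<Sum>c<m. cs c $ r * v $ c)"
    proof -
      have "(mat_of_cols n (map cs [0..<m]) *\<^sub>v v) $ r = row (mat_of_cols n (map cs [0..<m])) r \<bullet> v"
        using r by simp
      also have "\<dots> = (\<Sum>c\<in>{0..<m}. row (mat_of_cols n (map cs [0..<m])) r $ c * v $ c)"
      proof -
        have dv: "dim_vec v = m" using v by (rule carrier_vecD)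
        show ?thesis unfolding scalar_prod_def dv by (rule refl)
      qed
      also have "\<dots> = (\<Sum>c<m. cs c $ r * v $ c)"
        unfolding lessThan_atLeast0
      proof (rule sum.cong)
        fix c assume c: "c \<in> {0..<m}"
        then have cm: "c < m" by simp
        have "row (mat_of_cols n (map cs [0..<m])) r $ c = mat_of_cols n (map cs [0..<m]) $$ (r, c)"
          by (rule index_row(1)) (simp_all only: mat_of_cols_carrier length_map length_upt r cm diff_zero)
        also have "\<dots> = (map cs [0..<m]) ! c $ r"
          by (rule mat_of_cols_index) (simp_all only: r cm length_map length_upt diff_zero)
        also have "\<dots> = cs c $ r" using cm by simp
        finally show "row (mat_of_cols n (map cs [0..<m])) r $ c * v $ c = cs c $ r * v $ c" by simp
      qed simp
      finally show ?thesis .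
    qed
    also have "\<dots> = vsum n (\<lambda>c. v $ c \<cdot>\<^sub>v cs c) m $ r"
    proof -
      have "(\<Sum>c<m. cs c $ r * v $ c) = (\<Sum>c<m. (v $ c \<cdot>\<^sub>v cs c) $ r)"
      proof (rule sum.cong)
        fix c assume "c \<in> {..<m}"
        then have "dim_vec (cs c) = n" using cs[of c] by (simp add: carrier_vecD)
        then show "cs c $ r * v $ c = (v $ c \<cdot>\<^sub>v cs c) $ r" using r by simp
      qed simp
      then show ?thesis using vsum_index[of m "\<lambda>c. v $ c \<cdot>\<^sub>v cs c" n r, OF fc r] by simp
    qed
    finally show "(mat_of_cols n (map cs [0..<m]) *\<^sub>v v) $ r = vsum n (\<lambda>c. v $ c \<cdot>\<^sub>v cs c) m $ r" .
  qed
qed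

lemma vsum_rev:
  assumes fc: "\<And>c. c < m \<Longrightarrow> f c \<in> carrier_vec n"
  shows "vsum n f m = vsum n (\<lambda>c. f (m - 1 - c)) m"
proof -
  have fc2: "\<And>c. c < m \<Longrightarrow> f (m - 1 - c) \<in> carrier_vec n" using fc by simp
  show ?thesis
  proof (rule eq_vecI)
    show "dim_vec (vsum n f m) = dim_vec (vsum n (\<lambda>c. f (m - 1 - c)) m)"
      using vsum_carrier[of m f n, OF fc] vsum_carrier[of m "\<lambda>c. f (m - 1 - c)" n, OF fc2] by simp
  next
    fix r assume "r < dim_vec (vsum n (\<lambda>c. f (m - 1 - c)) m)"
    then have r: "r < n" using vsum_carrier[of m "\<lambda>c. f (m - 1 - c)" n, OF fc2] by simp
    have "vsum n (\<lambda>c. f (m - 1 - c)) m $ r = (\<Sum>c<m. f (m - Suc c) $ r)"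
      using vsum_index[of m "\<lambda>c. f (m - 1 - c)" n r, OF fc2 r] by simp
    also have "\<dots> = (\<Sum>c<m. f c $ r)" by (rule sum.nat_diff_reindex)
    also have "\<dots> = vsum n f m $ r" using vsum_index[of m f n r, OF fc r] by simp
    finally show "vsum n f m $ r = vsum n (\<lambda>c. f (m - 1 - c)) m $ r" by simp
  qed
qed

lemma state_W:
  assumes AC: "\<And>k. A k \<in> carrier_mat n n" and BC: "\<And>k. b k \<in> carrier_vec n"
    and xs: "xs \<in> carrier_vec n"
  shows "state A b u k xs n = aprod n A (k + int n - 1) n *\<^sub>v xs +
     Wmat n A b (k + int n - 1) *\<^sub>v vec n (\<lambda>c. u (k + int n - 1 - int c))"
proof -
  have apc: "\<And>K j. aprod n A K j \<in> carrier_mat n n" using aprod_carrier AC by blast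
  let ?K = "k + int n - 1"
  let ?f = "\<lambda>i. u (k + int i) \<cdot>\<^sub>v (aprod n A ?K (n - 1 - i) *\<^sub>v b (k + int i))"
  have fc: "\<And>i. ?f i \<in> carrier_vec n" using mult_mat_vec_carrier[OF apc BC] by simp
  have "vsum n ?f n = vsum n (\<lambda>c. ?f (n - 1 - c)) n" by (rule vsum_rev[OF fc])
  also have "\<dots> = vsum n (\<lambda>c. vec n (\<lambda>c. u (?K - int c)) $ c \<cdot>\<^sub>v (aprod n A ?K c *\<^sub>v b (?K - int c))) n"
  proof (rule vsum_cong)
    fix c assume c: "c < n"
    have e1: "n - 1 - (n - 1 - c) = c" using c by simp
    have e2: "k + int (n - 1 - c) = ?K - int c" using c by simp
    show "?f (n - 1 - c) = vec n (\<lambda>c. u (?K - int c)) $ c \<cdot>\<^sub>v (aprod n A ?K c *\<^sub>v b (?K - int c))"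
    proof -
      have e3: "vec n (\<lambda>c. u (?K - int c)) $ c = u (?K - int c)" using c by simp
      show ?thesis by (simp only: e1 e2 e3)
    qed
  qed
  also have "\<dots> = Wmat n A b ?K *\<^sub>v vec n (\<lambda>c. u (?K - int c))"
    unfolding Wmat_def
  proof (rule matcols_mult[symmetric])
    fix c assume "c < n"
    show "aprod n A ?K c *\<^sub>v b (?K - int c) \<in> carrier_vec n"
      using mult_mat_vec_carrier[OF apc BC] .
  qed simp
  finally have V: "vsum n ?f n = Wmat n A b ?K *\<^sub>v vec n (\<lambda>c. u (?K - int c))" .
  show ?thesis
    by (subst state_formula[OF AC BC xs, where u=u and k=k and j=n], subst V, rule refl)
qed


lemma mat_vec_zero: assumes M: "M \<in> carrier_mat n n" shows "M *\<^sub>v 0\<^sub>v n = (0\<^sub>v n :: real vec)"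
proof (rule eq_vecI)
  fix i assume "i < dim_vec (0\<^sub>v n :: real vec)"
  then have i: "i < n" by simp
  have "(M *\<^sub>v 0\<^sub>v n) $ i = row M i \<bullet> 0\<^sub>v n" using i M by simp
  also have "\<dots> = 0" unfolding scalar_prod_def by simp
  finally show "(M *\<^sub>v 0\<^sub>v n) $ i = (0\<^sub>v n :: real vec) $ i" using i by simp
qed (use M in simp)

theorem claim1:
  fixes n :: nat and A :: "int \<Rightarrow> real mat" and b :: "int \<Rightarrow> real vec"
  assumes "\<And>k. A k \<in> carrier_mat n n"
    and "\<And>k. b k \<in> carrier_vec n"
  shows "completely_controllable n A b \<longleftrightarrow> (\<forall>k. invertible_mat (Wmat n A b k))"
proof -
  note AC = assms(1) and BC = assms(2)
  have apc: "\<And>K j. aprod n A K j \<in> carrier_mat n n" using aprod_carrier AC by blast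
  have Wc: "\<And>K. Wmat n A b K \<in> carrier_mat n n"
  proof -
    fix K
    have l: "length (map (\<lambda>j. aprod n A K j *\<^sub>v b (K - int j)) [0..<n]) = n" by simp
    show "Wmat n A b K \<in> carrier_mat n n"
      unfolding Wmat_def using mat_of_cols_carrier(1)[of n "map (\<lambda>j. aprod n A K j *\<^sub>v b (K - int j)) [0..<n]"]
      unfolding l .
  qed
  show ?thesis
  proof
    assume cc: "completely_controllable n A b"
    show "\<forall>K. invertible_mat (Wmat n A b K)"
    proof
      fix K
      let ?W = "Wmat n A b K"
      let ?k = "K - int n + 1"
      have surj: "\<exists>v. v \<in> carrier_vec n \<and> ?W *\<^sub>v v = y" if y: "y \<in> carrier_vec n" for y
      proof -
        obtain u where u: "state A b u ?k (0\<^sub>v n) n = y"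
          using cc y zero_carrier_vec unfolding completely_controllable_def by blast
        have e: "?k + int n - 1 = K" by simp
        have "state A b u ?k (0\<^sub>v n) n = aprod n A K n *\<^sub>v 0\<^sub>v n + ?W *\<^sub>v vec n (\<lambda>c. u (K - int c))"
          using state_W[OF AC BC zero_carrier_vec, where u=u and k="?k"] unfolding e .
        also have "aprod n A K n *\<^sub>v 0\<^sub>v n = 0\<^sub>v n" using mat_vec_zero[OF apc] .
        also have "0\<^sub>v n + ?W *\<^sub>v vec n (\<lambda>c. u (K - int c)) = ?W *\<^sub>v vec n (\<lambda>c. u (K - int c))"
          by (rule left_zero_vec) (rule mult_mat_vec_carrier[OF Wc], simp)
        finally show ?thesis using u by (intro exI[of _ "vec n (\<lambda>c. u (K - int c))"]) simp
      qed
      define g where "g i = (SOME v. v \<in> carrier_vec n \<and> ?W *\<^sub>v v = unit_vec n i)" for i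
      have g: "g i \<in> carrier_vec n \<and> ?W *\<^sub>v g i = unit_vec n i" for i
        unfolding g_def by (rule someI_ex, rule surj) simp
      define B where "B = mat_of_cols n (map g [0..<n])"
      have Bc: "B \<in> carrier_mat n n"
      proof -
        have l: "length (map g [0..<n]) = n" by simp
        show ?thesis unfolding B_def using mat_of_cols_carrier(1)[of n "map g [0..<n]"] unfolding l .
      qed
      have colB: "col B j = g j" if "j < n" for j
        unfolding B_def using that g[of j] by simp
      have WB: "?W * B = 1\<^sub>m n"
      proof (rule eq_matI)
        fix i j assume i: "i < dim_row (1\<^sub>m n :: real mat)" and j: "j < dim_col (1\<^sub>m n :: real mat)"
        then have i': "i < n" and j': "j < n" by auto
        have "(?W * B) $$ (i, j) = row ?W i \<bullet> col B j" using i' j' Wc[of K] Bc by simp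
        also have "\<dots> = (?W *\<^sub>v col B j) $ i" using i' Wc[of K] by simp
        also have "\<dots> = unit_vec n j $ i" using colB[OF j'] g[of j] by simp
        also have "\<dots> = 1\<^sub>m n $$ (i, j)" using i' j' by simp
        finally show "(?W * B) $$ (i, j) = 1\<^sub>m n $$ (i, j)" .
      qed (use Wc Bc in auto)
      have BW: "B * ?W = 1\<^sub>m n" using mat_mult_left_right_inverse[OF Wc Bc WB] .
      show "invertible_mat ?W"
        unfolding invertible_mat_def inverts_mat_def square_mat.simps
      proof (intro conjI exI)
        have r: "dim_row ?W = n" and c: "dim_col ?W = n" using Wc[of K] by auto
        have rb: "dim_row B = n" using Bc by auto
        show "dim_col ?W = dim_row ?W" using r c by simp
        show "?W * B = 1\<^sub>m (dim_row ?W)" using WB r by simp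
        show "B * ?W = 1\<^sub>m (dim_row B)" using BW rb by simp
      qed
    qed
  next
    assume inv: "\<forall>K. invertible_mat (Wmat n A b K)"
    show "completely_controllable n A b"
      unfolding completely_controllable_def
    proof (intro allI ballI)
      fix k :: int and xs xf :: "real vec" assume xs: "xs \<in> carrier_vec n" and xf: "xf \<in> carrier_vec n"
      let ?K = "k + int n - 1"
      let ?W = "Wmat n A b ?K"
      have WcK: "?W \<in> carrier_mat n n" using Wc by blast
      obtain B where B1: "inverts_mat ?W B" and B2: "inverts_mat B ?W"
        using inv unfolding invertible_mat_def by blast
      have WB: "?W * B = 1\<^sub>m n" using B1 WcK unfolding inverts_mat_def by auto
      have BW: "B * ?W = 1\<^sub>m (dim_row B)" using B2 unfolding inverts_mat_def by auto
      have "dim_col (B * ?W) = n" using WcK by simp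
      then have rB: "dim_row B = n" using BW by simp
      have "dim_col (?W * B) = n" using WB by simp
      then have cB: "dim_col B = n" by simp
      have Bc: "B \<in> carrier_mat n n" using rB cB by auto
      let ?P = "aprod n A ?K n *\<^sub>v xs"
      have Pc: "?P \<in> carrier_vec n" using mult_mat_vec_carrier[OF apc xs] .
      let ?y = "xf - ?P"
      have yc: "?y \<in> carrier_vec n" using xf Pc by simp
      let ?v = "B *\<^sub>v ?y"
      have vc: "?v \<in> carrier_vec n" using mult_mat_vec_carrier[OF Bc yc] .
      define u where "u t = ?v $ nat (?K - t)" for t
      have uv: "vec n (\<lambda>c. u (?K - int c)) = ?v"
      proof (rule eq_vecI)
        fix c assume "c < dim_vec ?v"
        then have c: "c < n" using rB by simp
        show "vec n (\<lambda>c. u (?K - int c)) $ c = ?v $ c" using c unfolding u_def by simp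
      qed (use rB in simp)
      have Wv: "?W *\<^sub>v ?v = ?y"
        using assoc_mult_mat_vec[OF WcK Bc yc, symmetric] WB yc by simp
      have "state A b u k xs n = ?P + ?W *\<^sub>v vec n (\<lambda>c. u (?K - int c))"
        using state_W[OF AC BC xs, where u=u and k=k] .
      also have "\<dots> = ?P + ?y" unfolding uv Wv ..
      also have "\<dots> = xf"
      proof (rule eq_vecI)
        fix i assume "i < dim_vec xf"
        then have i: "i < n" using xf by simp
        have dP: "dim_vec ?P = n" using Pc by (rule carrier_vecD)
        have dx: "dim_vec xf = n" using xf by (rule carrier_vecD)
        show "(?P + ?y) $ i = xf $ i" using i dP dx by simp
      qed (use apc[of ?K n] carrier_vecD[OF xf] in simp)
      finally show "\<exists>u. state A b u k xs n = xf" by blast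
    qed
  qed
qed

end
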